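(* We have $\sup_A\overline{\mathrm{d}}(A)=1$, where the supremum is over all L-primitive sets $A\subset\mathbb{Z}_{>1}$ and $\overline{\mathrm{d}}(A)=\limsup_{x\to\infty}|A\cap[1,x]|/x$ is the upper natural density.
   Context: For an integer $a>1$ let $P(a)$ be its largest prime factor and $\mathrm{L}_a=\{ba: b\in\mathbb{N},\ \text{every prime } p\mid b \text{ satisfies } p\ge P(a)\}$. A set $A\subset\mathbb{Z}_{>1}$ is L-primitive if $a'\notin\mathrm{L}_a$ for all distinct $a,a'\in A$. *)

theory Defs
  imports "HOL-Analysis.Analysis" "HOL-Computational_Algebra.Primes"
begin

definition gpf :: "nat \<Rightarrow> nat" where
  "gpf a = Max (prime_factors a)"

definition Lset :: "nat \<Rightarrow> nat set" where
  "Lset a = {b * a | b. b \<ge> 1 \<and> (\<forall>p. prime p \<longrightarrow> p dvd b \<longrightarrow> p \<ge> gpf a)}"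

definition L_primitive :: "nat set \<Rightarrow> bool" where
  "L_primitive A \<longleftrightarrow> A \<subseteq> {2..} \<and> (\<forall>a\<in>A. \<forall>a'\<in>A. a \<noteq> a' \<longrightarrow> a' \<notin> Lset a)"

definition upper_density :: "nat set \<Rightarrow> ereal" where
  "upper_density A = limsup (\<lambda>n. ereal (real (card (A \<inter> {1..n})) / real n))"

end

theory Submission
  imports Defs "HOL-Number_Theory.Totient" "HOL-Real_Asymp.Real_Asymp"
begin


lemma coprime_shift: "coprime (u + c*Q) Q = coprime u (Q::nat)"
  by (metis coprime_iff_gcd_eq_1 gcd.commute gcd_add_mult add.commute)

lemma coprime_count:
  assumes "0 < (Q::nat)"
  shows "card {u\<in>{1..c*Q}. coprime u Q} = c * totient Q"
proof (induction c)
  case 0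
  then show ?case by simp
next
  case (Suc c)
  have eq: "{u\<in>{1..Suc c*Q}. coprime u Q} = {u\<in>{1..c*Q}. coprime u Q} \<union> (\<lambda>u. u + c*Q) ` totatives Q"
  proof (intro set_eqI iffI)
    fix u assume u: "u \<in> {u\<in>{1..Suc c*Q}. coprime u Q}"
    show "u \<in> {u\<in>{1..c*Q}. coprime u Q} \<union> (\<lambda>u. u + c*Q) ` totatives Q"
    proof (cases "u \<le> c*Q")
      case True then show ?thesis using u by auto
    next
      case False
      then have "u - c*Q \<in> totatives Q" using u coprime_shift[of "u - c*Q" c Q]
        by (auto simp: in_totatives_iff)
      moreover have "u = (u - c*Q) + c*Q" using False by simp
      ultimately show ?thesis by blast
    qed
  next
    fix u assume "u \<in> {u\<in>{1..c*Q}. coprime u Q} \<union> (\<lambda>u. u + c*Q) ` totatives Q"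
    then show "u \<in> {u\<in>{1..Suc c*Q}. coprime u Q}"
      by (auto simp: in_totatives_iff coprime_shift)
  qed
  have disj: "{u\<in>{1..c*Q}. coprime u Q} \<inter> (\<lambda>u. u + c*Q) ` totatives Q = {}"
    by (auto simp: in_totatives_iff)
  have "card ((\<lambda>u. u + c*Q) ` totatives Q) = totient Q"
    by (simp add: card_image totient_def)
  then show ?case using Suc eq disj
    by (simp add: card_Un_disjoint)
qed

lemma coprime_count_le:
  assumes "0 < (Q::nat)"
  shows "real (card {u\<in>{1..y}. coprime u Q}) \<le> (real y / Q + 1) * totient Q"
proof -
  have "y \<le> (y div Q + 1) * Q" using assms
    by (metis div_mult_mod_eq add_le_cancel_left distrib_right mod_less_divisor mult_1 less_imp_le)
  then have "card {u\<in>{1..y}. coprime u Q} \<le> card {u\<in>{1..(y div Q + 1)*Q}. coprime u Q}"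
    by (intro card_mono) auto
  also have "\<dots> = (y div Q + 1) * totient Q" by (rule coprime_count[OF assms])
  finally have "real (card {u\<in>{1..y}. coprime u Q}) \<le> real (y div Q + 1) * totient Q"
    by (metis of_nat_le_iff of_nat_mult)
  also have "\<dots> \<le> (real y / Q + 1) * totient Q"
    by (intro mult_right_mono) (auto simp: of_nat_div_le_of_nat)
  finally show ?thesis .
qed

lemma gpf_facts:
  assumes "2 \<le> n"
  shows "prime (gpf n)" "gpf n dvd n" "\<And>p. prime p \<Longrightarrow> p dvd n \<Longrightarrow> p \<le> gpf n"
proof -
  have fin: "finite (prime_factors n)" by simp
  obtain p where "prime p" "p dvd n" using assms prime_factor_nat[of n] by auto
  then have "p \<in> prime_factors n" using assms by (auto simp: in_prime_factors_iff)
  then have ne: "prime_factors n \<noteq> {}" by blast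
  have "gpf n \<in> prime_factors n" unfolding gpf_def using Max_in[OF fin ne] .
  then show "prime (gpf n)" "gpf n dvd n" by (auto simp: in_prime_factors_iff)
  fix q assume "prime q" "q dvd n"
  then have "q \<in> prime_factors n" using assms by (auto simp: in_prime_factors_iff)
  then show "q \<le> gpf n" unfolding gpf_def using fin by simp
qed

lemma totient_fact_bound:
  "harm N * real (totient (fact N :: nat)) \<le> real (fact N :: nat)"
proof -
  define F where "F = (fact N :: nat)"
  have Fpos: "0 < F" unfolding F_def by simp
  define U where "U = (\<lambda>s. (\<lambda>u. s*u) ` {u\<in>{1..(F div s)*F}. coprime u F})"
  have sdvd: "s dvd F" if "s \<in> {1..N}" for s using that unfolding F_def by (auto intro: dvd_fact)
  have cardU: "card (U s) = (F div s) * totient F" if "s \<in> {1..N}" for s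
  proof -
    have "inj_on (\<lambda>u. s*u) {u\<in>{1..(F div s)*F}. coprime u F}" using that by (auto simp: inj_on_def)
    then show ?thesis unfolding U_def using coprime_count[OF Fpos] by (simp add: card_image)
  qed
  have sub: "(\<Union>s\<in>{1..N}. U s) \<subseteq> {1..F*F}"
  proof
    fix x assume "x \<in> (\<Union>s\<in>{1..N}. U s)"
    then obtain s u where s: "s \<in> {1..N}" and u: "1 \<le> u" "u \<le> (F div s)*F" and x: "x = s*u"
      unfolding U_def by auto
    have "s * u \<le> s * ((F div s)*F)" using u by simp
    also have "\<dots> = F * F" using sdvd[OF s] by simp
    finally show "x \<in> {1..F*F}" using s u x by auto
  qed
  have disj: "U s \<inter> U s' = {}" if "s \<in> {1..N}" "s' \<in> {1..N}" "s \<noteq> s'" for s s'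
  proof (rule ccontr)
    assume "U s \<inter> U s' \<noteq> {}"
    then obtain u u' where cu: "coprime u F" and cu': "coprime u' F" and eq: "s*u = s'*u'"
      unfolding U_def by auto
    have c1: "coprime s u'" using coprime_divisors[OF dvd_refl sdvd[OF that(1)] cu']
      by (simp add: coprime_commute)
    have c2: "coprime s' u" using coprime_divisors[OF dvd_refl sdvd[OF that(2)] cu]
      by (simp add: coprime_commute)
    have "s dvd s'*u'" using eq by (metis dvd_triv_left)
    then have "s dvd s'" using c1 by (simp add: coprime_dvd_mult_left_iff)
    moreover have "s' dvd s*u" using eq by (metis dvd_triv_left)
    then have "s' dvd s" using c2 by (simp add: coprime_dvd_mult_left_iff)
    ultimately show False using that dvd_antisym by blast
  qed
  have "(\<Sum>s\<in>{1..N}. card (U s)) = card (\<Union>s\<in>{1..N}. U s)"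
  proof (rule card_UN_disjoint[symmetric])
    show "\<forall>s\<in>{1..N}. finite (U s)" by (simp add: U_def)
    show "\<forall>s\<in>{1..N}. \<forall>j\<in>{1..N}. s \<noteq> j \<longrightarrow> U s \<inter> U j = {}" using disj by blast
  qed simp
  also have "\<dots> \<le> F*F" using card_mono[OF _ sub] by simp
  finally have le: "(\<Sum>s\<in>{1..N}. (F div s) * totient F) \<le> F*F"
    using cardU by simp
  have "real F * (harm N * real (totient F)) = (\<Sum>s\<in>{1..N}. real (F div s) * totient F)"
    unfolding harm_def sum_distrib_left sum_distrib_right
    by (intro sum.cong refl) (auto simp: real_of_nat_div sdvd field_simps)
  also have "\<dots> = real (\<Sum>s\<in>{1..N}. (F div s) * totient F)" by simp
  also have "\<dots> \<le> real F * real F" using le by (metis of_nat_le_iff of_nat_mult)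
  finally have "real F * (harm N * real (totient F)) \<le> real F * real F" .
  then show ?thesis using Fpos unfolding F_def by simp
qed

lemma smooth_count:
  "card {n\<in>{1..(2::nat)^L}. \<forall>p. prime p \<longrightarrow> p dvd n \<longrightarrow> p \<le> N} \<le> (L+1)^(N+1)"
proof -
  define SM where "SM = {n\<in>{1..(2::nat)^L}. \<forall>p. prime p \<longrightarrow> p dvd n \<longrightarrow> p \<le> N}"
  define P where "P = {p::nat. prime p \<and> p \<le> N}"
  define f where "f = (\<lambda>n::nat. restrict (\<lambda>p. multiplicity p n) P)"
  have finP: "finite P" unfolding P_def by simp
  have cardP: "card P \<le> N+1"
  proof -
    have "P \<subseteq> {0..N}" unfolding P_def by auto
    then show ?thesis using card_mono[of "{0..N}" P] by simp
  qed
  have mult_le: "multiplicity p n \<le> L" if "prime p" "n \<in> SM" for p n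
  proof -
    have n: "1 \<le> n" "n \<le> 2^L" using that unfolding SM_def by auto
    have "p ^ multiplicity p n dvd n" by (rule multiplicity_dvd)
    then have "p ^ multiplicity p n \<le> n" using n dvd_imp_le by auto
    moreover have "2 ^ multiplicity p n \<le> p ^ multiplicity p n"
      using prime_ge_2_nat[OF that(1)] by (simp add: power_mono)
    ultimately have "(2::nat) ^ multiplicity p n \<le> 2 ^ L" using n by linarith
    then show ?thesis by simp
  qed
  have img: "f ` SM \<subseteq> PiE P (\<lambda>_. {0..L})"
  proof
    fix x assume "x \<in> f ` SM"
    then obtain n where n: "n \<in> SM" "x = f n" by auto
    show "x \<in> PiE P (\<lambda>_. {0..L})" unfolding n f_def
      by (simp add: restrict_PiE_iff P_def mult_le n(1))
  qed
  have inj: "inj_on f SM"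
  proof (rule inj_onI)
    fix n n' assume n: "n \<in> SM" and n': "n' \<in> SM" and eq: "f n = f n'"
    have "multiplicity p n = multiplicity p n'" if "prime p" for p
    proof (cases "p \<le> N")
      case True
      then have "p \<in> P" using that unfolding P_def by simp
      then show ?thesis using fun_cong[OF eq, of p] unfolding f_def by simp
    next
      case False
      then have "\<not> p dvd n" "\<not> p dvd n'" using n n' that unfolding SM_def by auto
      then show ?thesis by (simp add: not_dvd_imp_multiplicity_0)
    qed
    moreover have "n \<noteq> 0" "n' \<noteq> 0" using n n' unfolding SM_def by auto
    ultimately have "normalize n = normalize n'" by (intro multiplicity_eq_imp_eq)
    then show "n = n'" by simp
  qed
  have "card SM \<le> card (PiE P (\<lambda>_. {0..L::nat}))"
    using card_inj_on_le[OF inj img] finP by (simp add: finite_PiE)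
  also have "\<dots> = (L+1)^card P" using finP by (simp add: card_PiE)
  also have "\<dots> \<le> (L+1)^(N+1)" using cardP by (intro power_increasing) auto
  finally show ?thesis unfolding SM_def .
qed



lemma exL: "\<exists>L::nat. (c::nat) \<le> 2^L \<and> (L+1)^a * K \<le> (2::nat)^L"
proof -
  have "((\<lambda>L::nat. real ((L+1)^a) * K / 2^L) \<longlongrightarrow> 0) sequentially"
    by real_asymp
  then have ev1: "eventually (\<lambda>L. real ((L+1)^a) * K / 2^L < 1) sequentially"
    by (rule order_tendstoD) simp
  have ev2: "eventually (\<lambda>L::nat. c \<le> L) sequentially" by (rule eventually_ge_at_top)
  obtain L where L1: "real ((L+1)^a) * K / 2^L < 1" and L2: "c \<le> L"
    using eventually_happens'[OF _ eventually_conj[OF ev1 ev2]] by auto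
  have "real ((L+1)^a * K) \<le> real (2^L)" using L1 by (simp add: field_simps)
  then have "(L+1)^a * K \<le> (2::nat)^L" by (simp only: of_nat_le_iff)
  moreover have "c \<le> 2^L" using L2 less_exp[of L] by linarith
  ultimately show ?thesis by blast
qed

lemma harm_big: "\<exists>n::nat. K \<le> n \<and> c \<le> (harm n :: real)"
proof -
  define n where "n = max K (nat \<lceil>exp c\<rceil>)"
  have "exp c \<le> real n + 1" unfolding n_def by linarith
  then have "ln (exp c) \<le> ln (real n + 1)" by (subst ln_le_cancel_iff) auto
  then have "c \<le> ln (real n + 1)" by simp
  also have "\<dots> \<le> harm n" by (rule harm_ge_ln)
  finally show ?thesis by (intro exI[of _ n]) (simp add: n_def)
qed

lemma geom_half: "(\<Sum>i<j. (1/2::real)^i) \<le> 2"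
proof -
  have "(\<Sum>i<j. (1/2::real)^i) = 2 - 2 * (1/2)^j"
    by (induction j) (simp_all add: field_simps)
  also have "\<dots> \<le> 2" by simp
  finally show ?thesis .
qed



lemma key_bad:
  fixes K :: nat and N :: "nat \<Rightarrow> nat" and x :: "nat \<Rightarrow> nat" and B :: "nat \<Rightarrow> nat set"
  assumes B_def: "\<And>j. B j = {n. x j < K*n \<and> n \<le> x j \<and> N j < gpf n \<and> 2 \<le> n}"
    and NK: "\<And>i. K \<le> N i"
    and xmono: "\<And>i j. i < j \<Longrightarrow> K * x i \<le> x j"
    and n: "n \<in> B j" and m: "m \<in> B i" and nm: "m \<noteq> n" and L: "n \<in> Lset m"
  shows "i < j \<and> (\<exists>b. n = b*m \<and> 1 \<le> b \<and> b \<le> x j div m \<and> coprime b (fact (N i)))"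
proof -
  obtain b where b: "n = b*m" "1 \<le> b" "\<And>p. prime p \<Longrightarrow> p dvd b \<Longrightarrow> gpf m \<le> p"
    using L unfolding Lset_def by auto
  have mB: "x i < K*m" "m \<le> x i" "N i < gpf m" "2 \<le> m" using m B_def by auto
  have nB: "x j < K*n" "n \<le> x j" "N j < gpf n" "2 \<le> n" using n B_def by auto
  have cop: "coprime b (fact (N i))"
  proof (rule ccontr)
    assume "\<not> coprime b (fact (N i))"
    then have "gcd b (fact (N i)) \<noteq> 1" by (simp add: coprime_iff_gcd_eq_1)
    then obtain p where p: "prime p" "p dvd gcd b (fact (N i))" using prime_factor_nat by blast
    then have "p dvd b" "p dvd fact (N i)" by auto
    then have "p \<le> N i" "gpf m \<le> p" using p(1) b(3) prime_dvd_fact_iff by auto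
    then show False using mB(3) by linarith
  qed
  have "b \<noteq> 1" using b nm by auto
  then have "2 \<le> b" using b(2) by linarith
  then obtain p where p: "prime p" "p dvd b" using prime_factor_nat[of b] by auto
  have "K < p" using b(3)[OF p] mB(3) NK[of i] by linarith
  moreover have "p \<le> b" using p(2) b(2) dvd_imp_le by auto
  ultimately have Kb: "K < b" by linarith
  then have nKm: "K*m < n" using b(1) mB(4) by simp
  have ij: "i < j"
  proof (rule ccontr)
    assume "\<not> i < j"
    then consider "i = j" | "j < i" by linarith
    then show False
    proof cases
      case 1
      then show False using nKm mB(1) nB(2) by simp
    next
      case 2
      have "K * x j \<le> x i" using xmono[OF 2] .
      also have "\<dots> < K*m" using mB(1) .
      finally have "x j < m" by simp
      moreover have "m \<le> n" using b(1) b(2) by simp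
      ultimately show False using nB(2) by linarith
    qed
  qed
  have "b * m \<le> x j" using b(1) nB(2) by simp
  then have "b \<le> x j div m" using mB(4) by (simp add: less_eq_div_iff_mult_less_eq)
  then show ?thesis using ij b(1,2) cop by blast
qed



lemma construction:
  fixes K :: nat assumes K2: "2 \<le> K"
  shows "\<exists>A. L_primitive A \<and> ereal (1 - 4 / real K) \<le> upper_density A"
proof -
  have "\<forall>i. \<exists>n. K \<le> n \<and> real K * real K * 2^(i+1) \<le> (harm n :: real)"
    using harm_big by blast
  then obtain N where N: "\<And>i. K \<le> N i" "\<And>i. real K * real K * 2^(i+1) \<le> (harm (N i) :: real)"
    by metis
  define Q where "Q = (\<lambda>i. fact (N i) :: nat)"
  have Qpos: "\<And>i. 0 < Q i" unfolding Q_def by simp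
  have totQ: "real K * real K * 2^(i+1) * totient (Q i) \<le> Q i" for i
  proof -
    have "real K * real K * 2^(i+1) * totient (Q i) \<le> harm (N i) * totient (Q i)"
      using N(2)[of i] by (intro mult_right_mono) auto
    also have "\<dots> \<le> Q i" unfolding Q_def by (rule totient_fact_bound)
    finally show ?thesis .
  qed
  obtain L0 where L0: "K \<le> 2^L0" "(L0+1)^(N 0 + 1) * K \<le> (2::nat)^L0"
    using exL by blast
  have "\<forall>j prev. \<exists>L. K * 2^(j+1) * 2^prev * Q j \<le> 2^L \<and> (L+1)^(N (Suc j) + 1) * K \<le> (2::nat)^L"
    using exL by blast
  then obtain g where g: "\<And>j prev. K * 2^(j+1) * 2^prev * Q j \<le> 2^(g j prev)"
     "\<And>j prev. (g j prev + 1)^(N (Suc j) + 1) * K \<le> (2::nat)^(g j prev)"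
    by metis
  define Lx where "Lx = rec_nat L0 g"
  have Lx0: "Lx 0 = L0" and LxS: "\<And>j. Lx (Suc j) = g j (Lx j)" unfolding Lx_def by simp_all
  define x where "x = (\<lambda>j. (2::nat)^(Lx j))"
  have X2: "(Lx j + 1)^(N j + 1) * K \<le> x j" for j
  proof (cases j)
    case 0 then show ?thesis using L0(2) by (simp only: x_def Lx0)
  next
    case (Suc j') then show ?thesis using g(2)[of j' "Lx j'"] by (simp only: x_def LxS)
  qed
  have X3: "K * 2^(j+1) * x j * Q j \<le> x (Suc j)" for j
    using g(1)[of j "Lx j"] by (simp add: x_def LxS)
  have xpos: "0 < x j" for j by (simp add: x_def)
  have Kx: "K * x j \<le> x (Suc j)" for j
  proof -
    have "K * x j * 1 \<le> K * x j * (2^(j+1) * Q j)"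
      using Qpos[of j] by (intro mult_le_mono2) simp
    also have "\<dots> = K * 2^(j+1) * x j * Q j" by simp
    finally have "K * x j \<le> K * 2^(j+1) * x j * Q j" by simp
    then show ?thesis using X3[of j] by (rule order_trans)
  qed
  have xsuc: "x j < x (Suc j)" for j
  proof -
    have "x j < K * x j" using K2 xpos[of j] by simp
    then show ?thesis using Kx[of j] by (rule less_le_trans)
  qed
  then have smx: "strict_mono x" by (simp add: strict_mono_Suc_iff)
  have xmono: "i \<le> j \<Longrightarrow> x i \<le> x j" for i j
    using lift_Suc_mono_le[of x] xsuc less_imp_le by blast
  have X1: "K \<le> x j" for j
  proof (cases j)
    case 0 then show ?thesis using L0 by (simp add: x_def Lx0)
  next
    case (Suc j')
    have "K * 1 \<le> K * x j'" using xpos[of j'] by (intro mult_le_mono2) simp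
    then have "K \<le> K * x j'" by simp
    then show ?thesis unfolding Suc by (rule order_trans[OF _ Kx[of j']])
  qed
  have X5: "K * 2^(i+1) * x i * Q i \<le> x j" if "i < j" for i j
    using X3[of i] xmono[of "Suc i" j] that by simp
  have Kxx: "K * x i \<le> x j" if "i < j" for i j
    using Kx[of i] xmono[of "Suc i" j] that by simp
  define B where "B = (\<lambda>j. {n. x j < K*n \<and> n \<le> x j \<and> N j < gpf n \<and> 2 \<le> n})"
  have Bj: "\<And>j. B j = {n. x j < K*n \<and> n \<le> x j \<and> N j < gpf n \<and> 2 \<le> n}"
    by (simp add: B_def)
  define S where "S = {n. \<exists>j. n \<in> B j}"
  define A where "A = {n \<in> S. \<forall>m\<in>S. m \<noteq> n \<longrightarrow> n \<notin> Lset m}"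
  have prim: "L_primitive A"
    unfolding L_primitive_def
  proof
    show "A \<subseteq> {2..}" unfolding A_def S_def B_def by auto
    show "\<forall>a\<in>A. \<forall>a'\<in>A. a \<noteq> a' \<longrightarrow> a' \<notin> Lset a"
      unfolding A_def by blast
  qed
  have dens: "(1 - 4 / real K) * real (x j) \<le> real (card (A \<inter> {1..x j}))" for j
  proof -
    define X where "X = x j"
    define I where "I = {n. X < K*n \<and> n \<le> X}"
    define SM where "SM = {n\<in>{1..(2::nat)^(Lx j)}. \<forall>p. prime p \<longrightarrow> p dvd n \<longrightarrow> p \<le> N j}"
    define C where "C = (\<lambda>i y. {u\<in>{1..y}. coprime u (Q i)})"
    define Bad where "Bad = (\<Union>i\<in>{..<j}. \<Union>m\<in>B i. (\<lambda>b. b*m) ` C i (X div m))"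
    have Kpos: "0 < K" using K2 by simp
    have finB: "finite (B i)" for i
      by (rule finite_subset[of _ "{..x i}"]) (auto simp: B_def)
    have finBad: "finite Bad" unfolding Bad_def C_def using finB by auto
    have finSM: "finite SM" unfolding SM_def by auto
    have cover: "I \<subseteq> (A \<inter> {1..X}) \<union> SM \<union> Bad"
    proof
      fix n assume nI: "n \<in> I"
      show "n \<in> (A \<inter> {1..X}) \<union> SM \<union> Bad"
      proof (rule ccontr)
        assume nn: "n \<notin> (A \<inter> {1..X}) \<union> SM \<union> Bad"
        have n1: "X < K*n" "n \<le> X" using nI unfolding I_def by auto
        have "K * 1 \<le> X" using X1[of j] unfolding X_def by simp
        then have n2: "2 \<le> n" using n1(1) by (cases "n = 0 \<or> n = 1") auto
        have "n \<notin> SM" using nn by blast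
        then obtain p where p: "prime p" "p dvd n" "\<not> p \<le> N j"
          using n1 n2 unfolding SM_def X_def x_def by auto
        have "p \<le> gpf n" using gpf_facts(3)[OF n2 p(1,2)] .
        then have nB: "n \<in> B j" unfolding B_def using n1 n2 p(3) unfolding X_def by auto
        then have nS: "n \<in> S" unfolding S_def by blast
        have "n \<notin> A" using nn n1 n2 by auto
        then obtain m where mS: "m \<in> S" and mn: "m \<noteq> n" and L: "n \<in> Lset m"
          using nS unfolding A_def by blast
        then obtain i where mB: "m \<in> B i" unfolding S_def by blast
        have "i < j \<and> (\<exists>b. n = b*m \<and> 1 \<le> b \<and> b \<le> x j div m \<and> coprime b (fact (N i)))"
          by (rule key_bad[OF Bj N(1) Kxx nB mB mn L])
        then obtain b where b: "i < j" "n = b*m" "1 \<le> b" "b \<le> X div m" "coprime b (Q i)"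
          unfolding X_def Q_def by blast
        have "b \<in> C i (X div m)" unfolding C_def using b by simp
        then have "n \<in> (\<lambda>b. b*m) ` C i (X div m)" using b(2) by (rule rev_image_eqI)
        then have "n \<in> (\<Union>m\<in>B i. (\<lambda>b. b*m) ` C i (X div m))" by (rule UN_I[OF mB])
        then have "n \<in> Bad" unfolding Bad_def by (rule UN_I[rotated]) (use b(1) in simp)
        then show False using nn by blast
      qed
    qed
    have "card I \<le> card ((A \<inter> {1..X}) \<union> SM \<union> Bad)"
      by (rule card_mono[OF _ cover]) (use finBad finSM in auto)
    also have "\<dots> \<le> card (A \<inter> {1..X}) + card SM + card Bad"
      by (meson add_le_mono card_Un_le le_refl order_trans)
    finally have c1: "real (card I) \<le> real (card (A \<inter> {1..X})) + real (card SM) + real (card Bad)"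
      by (metis of_nat_add of_nat_le_iff)
    have cI: "real X - real X / K \<le> real (card I)"
    proof -
      have "I = {X div K<..X}"
        unfolding I_def by (auto simp: div_less_iff_less_mult[OF Kpos] mult.commute)
      then have "card I = X - X div K" by simp
      then have "real (card I) = real X - real (X div K)" by (simp add: of_nat_diff div_le_dividend)
      moreover have "real (X div K) \<le> real X / real K" by (rule of_nat_div_le_of_nat)
      ultimately show ?thesis by linarith
    qed
    have cSM: "real (card SM) \<le> real X / K"
    proof -
      have "card SM \<le> (Lx j + 1)^(N j + 1)" unfolding SM_def by (rule smooth_count)
      then have "card SM * K \<le> (Lx j + 1)^(N j + 1) * K" by (rule mult_le_mono1)
      also have "\<dots> \<le> X" using X2[of j] unfolding X_def .
      finally have "real (card SM) * real K \<le> real X" by (metis of_nat_le_iff of_nat_mult)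
      then show ?thesis using Kpos by (simp add: pos_le_divide_eq)
    qed
    have cBad: "real (card Bad) \<le> real X / K * 2"
    proof -
      have "card Bad \<le> (\<Sum>i<j. card (\<Union>m\<in>B i. (\<lambda>b. b*m) ` C i (X div m)))"
        unfolding Bad_def by (rule card_UN_le) simp
      also have "\<dots> \<le> (\<Sum>i<j. \<Sum>m\<in>B i. card (C i (X div m)))"
      proof (rule sum_mono)
        fix i
        have "card (\<Union>m\<in>B i. (\<lambda>b. b*m) ` C i (X div m)) \<le> (\<Sum>m\<in>B i. card ((\<lambda>b. b*m) ` C i (X div m)))"
          by (rule card_UN_le[OF finB])
        also have "\<dots> \<le> (\<Sum>m\<in>B i. card (C i (X div m)))"
          by (rule sum_mono, rule card_image_le) (simp add: C_def)
        finally show "card (\<Union>m\<in>B i. (\<lambda>b. b*m) ` C i (X div m)) \<le> (\<Sum>m\<in>B i. card (C i (X div m)))" .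
      qed
      finally have cb: "real (card Bad) \<le> (\<Sum>i<j. real (\<Sum>m\<in>B i. card (C i (X div m))))"
        by (metis of_nat_le_iff of_nat_sum)
      have per: "real (\<Sum>m\<in>B i. card (C i (X div m))) \<le> real X / K * (1/2)^i" if ij: "i < j" for i
      proof -
        define t where "t = real (totient (Q i))"
        define q where "q = real (Q i)"
        define xi where "xi = real (x i)"
        define \<beta> where "\<beta> = (real X * K / (xi * q) + 1) * t"
        have qpos: "0 < q" unfolding q_def using Qpos[of i] by simp
        have xipos: "0 < xi" unfolding xi_def using xpos[of i] by simp
        have t0: "0 \<le> t" unfolding t_def by simp
        have tq: "t \<le> q" unfolding t_def q_def by (simp add: totient_le)
        have trm: "real (card (C i (X div m))) \<le> \<beta>" if mB: "m \<in> B i" for m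
        proof -
          have m: "x i < K*m" "2 \<le> m" using mB unfolding B_def by auto
          have "real (card (C i (X div m))) \<le> (real (X div m) / q + 1) * t"
            unfolding C_def q_def t_def by (rule coprime_count_le[OF Qpos])
          also have "\<dots> \<le> (real X * K / xi / q + 1) * t"
          proof -
            have "real (X div m) \<le> real X / real m" by (rule of_nat_div_le_of_nat)
            also have "\<dots> = real X * K / (K * real m)" using Kpos by simp
            also have "\<dots> \<le> real X * K / xi"
            proof (rule frac_le)
              show "xi \<le> real K * real m" unfolding xi_def using m(1)
                by (metis less_imp_le of_nat_le_iff of_nat_mult)
            qed (use xipos in auto)
            finally have "real (X div m) \<le> real X * K / xi" .
            then have "real (X div m) / q \<le> real X * K / xi / q"
              using qpos by (intro divide_right_mono) auto
            then show ?thesis using t0 by (intro mult_right_mono) auto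
          qed
          also have "\<dots> = \<beta>" unfolding \<beta>_def by simp
          finally show ?thesis .
        qed
        have "real (\<Sum>m\<in>B i. card (C i (X div m))) = (\<Sum>m\<in>B i. real (card (C i (X div m))))"
          by simp
        also have "\<dots> \<le> real (card (B i)) * \<beta>"
          using trm by (rule sum_bounded_above)
        also have "\<dots> \<le> xi * \<beta>"
        proof (rule mult_right_mono)
          have "B i \<subseteq> {1..x i}" unfolding B_def by auto
          then have "card (B i) \<le> x i" using card_mono[of "{1..x i}" "B i"] by simp
          then show "real (card (B i)) \<le> xi" unfolding xi_def by simp
          show "0 \<le> \<beta>" unfolding \<beta>_def using t0 xipos qpos by simp
        qed
        also have "\<dots> = real X * K * t / q + xi * t"
          unfolding \<beta>_def using xipos qpos by (simp add: field_simps)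
        also have "\<dots> \<le> real X / (K * 2^(i+1)) + real X / (K * 2^(i+1))"
        proof (rule add_mono)
          have h: "real X * (real K * real K * 2^(i+1) * t) \<le> real X * q"
            using totQ[of i] unfolding t_def q_def by (intro mult_left_mono) auto
          have "real X * K * t / q = (real X * (real K * real K * 2^(i+1) * t) / q) / (K * 2^(i+1))"
            using Kpos by (simp add: field_simps)
          also have "\<dots> \<le> (real X * q / q) / (K * 2^(i+1))"
            using h qpos by (intro divide_right_mono) auto
          also have "\<dots> = real X / (K * 2^(i+1))" using qpos by simp
          finally show "real X * K * t / q \<le> real X / (K * 2^(i+1))" .
          have h2: "real K * 2^(i+1) * xi * q \<le> real X"
          proof -
            have "real (K * 2^(i+1) * x i * Q i) \<le> real X" using X5[OF ij] unfolding X_def by (simp only: of_nat_le_iff)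
            then show ?thesis unfolding xi_def q_def by simp
          qed
          have "xi * t \<le> xi * q" using tq xipos by (intro mult_left_mono) auto
          also have "\<dots> = (real K * 2^(i+1) * xi * q) / (K * 2^(i+1))" using Kpos by simp
          also have "\<dots> \<le> real X / (K * 2^(i+1))"
            using h2 by (intro divide_right_mono) auto
          finally show "xi * t \<le> real X / (K * 2^(i+1))" .
        qed
        also have "\<dots> = real X / K * (1/2)^i"
          using Kpos by (simp add: field_simps power_one_over)
        finally show ?thesis .
      qed
      have "(\<Sum>i<j. real (\<Sum>m\<in>B i. card (C i (X div m)))) \<le> (\<Sum>i<j. real X / K * (1/2)^i)"
        using per by (intro sum_mono) auto
      also have "\<dots> = real X / K * (\<Sum>i<j. (1/2)^i)" by (simp add: sum_distrib_left)
      also have "\<dots> \<le> real X / K * 2"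
        using geom_half[of j] by (intro mult_left_mono) auto
      finally have fin: "(\<Sum>i<j. real (\<Sum>m\<in>B i. card (C i (X div m)))) \<le> real X / K * 2" .
      show ?thesis by (rule order_trans[OF cb fin])
    qed
    have "(1 - 4 / real K) * real X = real X - real X / K - real X / K - real X / K * 2"
      by (simp add: field_simps)
    also have "\<dots> \<le> real (card (A \<inter> {1..X}))" using c1 cI cSM cBad by linarith
    finally show ?thesis unfolding X_def .
  qed
  define f where "f = (\<lambda>n. ereal (real (card (A \<inter> {1..n})) / real n))"
  have "ereal (1 - 4 / real K) \<le> limsup (f \<circ> x)"
  proof (rule le_Limsup)
    show "sequentially \<noteq> bot" by simp
    show "\<forall>\<^sub>F n in sequentially. ereal (1 - 4 / real K) \<le> (f \<circ> x) n"
    proof (rule always_eventually, rule allI)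
      fix n
      have "1 - 4 / real K \<le> real (card (A \<inter> {1..x n})) / real (x n)"
        using dens[of n] xpos[of n] by (simp add: field_simps)
      then show "ereal (1 - 4 / real K) \<le> (f \<circ> x) n" by (simp add: f_def)
    qed
  qed
  also have "\<dots> \<le> limsup f" by (rule limsup_subseq_mono[OF smx])
  also have "\<dots> = upper_density A" unfolding upper_density_def f_def ..
  finally show ?thesis using prim by blast
qed



lemma ud_le1: "upper_density A \<le> 1"
  unfolding upper_density_def
proof (rule Limsup_bounded, rule always_eventually, rule allI)
  fix n :: nat
  have "card (A \<inter> {1..n}) \<le> card {1..n}" by (rule card_mono) auto
  then have "real (card (A \<inter> {1..n})) \<le> real n" by simp
  then have "real (card (A \<inter> {1..n})) / real n \<le> 1"
    by (cases "n = 0") (auto simp: divide_le_eq)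
  then show "ereal (real (card (A \<inter> {1..n})) / real n) \<le> 1" by simp
qed

theorem proposition5p2:
  shows "(SUP A \<in> {A. L_primitive A}. upper_density A) = 1"
proof (rule antisym)
  show "(SUP A \<in> {A. L_primitive A}. upper_density A) \<le> 1"
    by (rule SUP_least) (rule ud_le1)
  show "1 \<le> (SUP A \<in> {A. L_primitive A}. upper_density A)"
  proof (rule ereal_le_epsilon2)
    fix e :: real assume e: "0 < e"
    define K where "K = nat \<lceil>4 / e\<rceil> + 2"
    have K2: "2 \<le> K" unfolding K_def by simp
    have "4 / e \<le> real K" unfolding K_def by linarith
    then have "4 / real K \<le> e" using e K2
      by (simp add: divide_le_eq mult.commute pos_divide_le_eq)
    obtain A where A: "L_primitive A" "ereal (1 - 4 / real K) \<le> upper_density A"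
      using construction[OF K2] by blast
    have "ereal (1 - 4 / real K) \<le> (SUP A \<in> {A. L_primitive A}. upper_density A)"
      using A by (meson SUP_upper mem_Collect_eq order_trans)
    then have "ereal (1 - 4 / real K) + ereal e \<le> (SUP A \<in> {A. L_primitive A}. upper_density A) + ereal e"
      by (rule add_right_mono)
    moreover have "1 \<le> ereal (1 - 4 / real K) + ereal e"
      using \<open>4 / real K \<le> e\<close> by simp
    ultimately show "1 \<le> (SUP A \<in> {A. L_primitive A}. upper_density A) + ereal e"
      by (rule order_trans[rotated])
  qed
qed


end
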